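(* Identify distributions on $S\times S$ with matrices in $\mathbb{R}^{S\times S}$. Let $\Phi$ be the set of $S\times S$ permutation matrices, $I$ the identity matrix, and $\mathrm{co}\,\Phi$ the convex hull of $\Phi$. Then $\mathcal{M}(m)=\big(\mu_0-I+\mathrm{co}\,\Phi\big)\cap\mathbb{R}_+^{S\times S}$, where $\mu_0-I+\mathrm{co}\,\Phi=\{\mu_0-I+J:J\in\mathrm{co}\,\Phi\}$.
   Context: $S$ is a finite set and $m\in\Delta(S)$. $\mathcal{M}(m)$ is the set of probability distributions on $S\times S$ both of whose marginals equal $m$, and $\mu_0\in\mathcal{M}(m)$ is defined by $\mu_0(s,s)=m(s)$ and $\mu_0(s,t)=0$ for $s\neq t$. A permutation matrix is a square matrix with entries in $\{0,1\}$ having exactly one entry equal to $1$ in each row and each column. *)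

theory Defs
  imports "HOL-Analysis.Analysis"
begin

text \<open>The finite set S is represented by a finite type 's; matrices in R^(S x S)
  are elements of real^'s^'s, with entry (s,t) given by A$s$t.\<close>

definition prob_dist :: "real^'s::finite \<Rightarrow> bool" where
  "prob_dist m \<longleftrightarrow> (\<forall>s. 0 \<le> m$s) \<and> (\<Sum>s\<in>UNIV. m$s) = 1"

definition couplings :: "real^'s::finite \<Rightarrow> (real^'s^'s) set" where
  "couplings m = {\<mu>. (\<forall>s t. 0 \<le> \<mu>$s$t) \<and> (\<Sum>s\<in>UNIV. \<Sum>t\<in>UNIV. \<mu>$s$t) = 1
       \<and> (\<forall>s. (\<Sum>t\<in>UNIV. \<mu>$s$t) = m$s) \<and> (\<forall>t. (\<Sum>s\<in>UNIV. \<mu>$s$t) = m$t)}"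

definition mu0 :: "real^'s::finite \<Rightarrow> real^'s^'s" where
  "mu0 m = (\<chi> s t. if s = t then m$s else 0)"

definition perm_matrix :: "real^'s::finite^'s \<Rightarrow> bool" where
  "perm_matrix A \<longleftrightarrow> (\<forall>s t. A$s$t \<in> {0,1})
     \<and> (\<forall>s. \<exists>!t. A$s$t = 1) \<and> (\<forall>t. \<exists>!s. A$s$t = 1)"

end

theory Submission
  imports Defs
begin

definition DS :: "(real^'s::finite^'s) set" where
  "DS = {D. (\<forall>s t. 0 \<le> D$s$t) \<and> (\<forall>s. (\<Sum>t\<in>UNIV. D$s$t) = 1) \<and> (\<forall>t. (\<Sum>s\<in>UNIV. D$s$t) = 1)}"

lemma convex_DS: "convex (DS :: (real^'s::finite^'s) set)"
  unfolding convex_def DS_def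
  by (auto simp: sum.distrib sum_distrib_left[symmetric])

lemma bounded_DS: "bounded (DS :: (real^'s::finite^'s) set)"
proof -
  have "norm D \<le> real CARD('s)" if "D \<in> DS" for D :: "real^'s^'s"
  proof -
    have "norm D \<le> (\<Sum>s\<in>UNIV. norm (D$s))" unfolding norm_vec_def by (rule L2_set_le_sum) simp
    also have "\<dots> \<le> (\<Sum>s\<in>UNIV. (\<Sum>t\<in>UNIV. \<bar>D$s$t\<bar>))"
      by (rule sum_mono) (rule norm_le_l1_cart)
    also have "\<dots> = (\<Sum>s\<in>(UNIV::'s set). 1)" using that by (simp add: DS_def)
    finally show ?thesis by simp
  qed
  then show ?thesis unfolding bounded_iff by blast
qed

lemma closed_DS: "closed (DS :: (real^'s::finite^'s) set)"
proof -
  have "DS = (\<Inter>s. \<Inter>t. {D::real^'s^'s. 0 \<le> D$s$t}) \<inter> (\<Inter>s. {D. (\<Sum>t\<in>UNIV. D$s$t) = 1})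
     \<inter> (\<Inter>t. {D. (\<Sum>s\<in>UNIV. D$s$t) = 1})" by (auto simp: DS_def)
  also have "closed \<dots>"
    by (intro closed_Int closed_INT ballI closed_Collect_le closed_Collect_eq continuous_intros)
  finally show ?thesis .
qed

lemma compact_DS: "compact (DS :: (real^'s::finite^'s) set)"
  using bounded_DS closed_DS compact_eq_bounded_closed by blast


lemma sum_01:
  fixes f :: "'a::finite \<Rightarrow> real"
  assumes "\<And>x. x \<in> A \<Longrightarrow> f x = 0 \<or> f x = 1"
  shows "sum f A = real (card {x\<in>A. f x = 1})"
proof -
  have "sum f A = (\<Sum>x\<in>A. if f x = 1 then 1 else 0)"
    by (rule sum.cong) (use assms in auto)
  also have "\<dots> = real (card {x\<in>A. f x = 1})"
    by (simp add: sum.If_cases Int_def conj_commute)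
  finally show ?thesis .
qed

lemma frac_two:
  fixes f :: "'a::finite \<Rightarrow> real"
  assumes nn: "\<And>x. 0 \<le> f x" and s1: "sum f UNIV = 1" and "0 < f t" "f t < 1"
  shows "\<exists>t'. t' \<noteq> t \<and> 0 < f t' \<and> f t' < 1"
proof (rule ccontr)
  assume nt: "\<not> ?thesis"
  have le1: "f x \<le> 1" for x
    using member_le_sum[of x UNIV f] nn s1 by auto
  have h: "f x = 0 \<or> f x = 1" if "x \<in> UNIV - {t}" for x
  proof -
    have "x \<noteq> t" using that by simp
    then have "\<not> (0 < f x \<and> f x < 1)" using nt by blast
    then show ?thesis using nn[of x] le1[of x] by linarith
  qed
  define n where "n = card {x\<in>UNIV-{t}. f x = 1}"
  have "sum f UNIV = f t + sum f (UNIV - {t})"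
    by (simp add: sum.remove)
  also have "sum f (UNIV - {t}) = real n"
    unfolding n_def by (rule sum_01[OF h])
  finally have "f t = 1 - real n" using s1 by simp
  then have "0 < real n" "real n < 1"
    using assms(3,4) by linarith+
  then have "0 < n" "n < 1" by simp_all
  then show False by simp
qed

lemma zero_one_sum:
  fixes f :: "'a::finite \<Rightarrow> real"
  assumes "\<And>x. f x = 0 \<or> f x = 1" and "sum f UNIV = 1"
  shows "\<exists>!x. f x = 1"
proof -
  have "real (card {x\<in>UNIV. f x = 1}) = 1" using sum_01[of UNIV f] assms by simp
  then have "card {x. f x = 1} = 1" by simp
  then obtain a where a: "{x. f x = 1} = {a}" by (rule card_1_singletonE)
  have fa: "f a = 1" using a by (simp add: set_eq_iff)
  have uq: "x = a" if "f x = 1" for x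
  proof -
    have "x \<in> {x. f x = 1}" using that by simp
    then show ?thesis unfolding a by simp
  qed
  from fa uq show ?thesis by (intro ex1I)
qed

lemma perm_DS: "perm_matrix A \<Longrightarrow> A \<in> DS"
proof -
  assume p: "perm_matrix A"
  have z: "\<And>s t. A$s$t = 0 \<or> A$s$t = 1" using p unfolding perm_matrix_def by blast
  have r: "(\<Sum>t\<in>UNIV. A$s$t) = 1" for s
  proof -
    have ex: "\<exists>!t. A$s$t = 1" using p unfolding perm_matrix_def by blast
    then obtain t0 where t0: "A$s$t0 = 1" by blast
    have "\<And>t. A$s$t = 1 \<Longrightarrow> t = t0" using ex t0 by blast
    with t0 have e: "{t\<in>UNIV. A$s$t = 1} = {t0}" by blast
    have "(\<Sum>t\<in>UNIV. A$s$t) = real (card {t\<in>UNIV. A$s$t = 1})"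
      by (rule sum_01) (rule z)
    also have "\<dots> = 1" unfolding e by simp
    finally show ?thesis .
  qed
  have c: "(\<Sum>s\<in>UNIV. A$s$t) = 1" for t
  proof -
    have ex: "\<exists>!s. A$s$t = 1" using p unfolding perm_matrix_def by blast
    then obtain s0 where s0: "A$s0$t = 1" by blast
    have "\<And>s. A$s$t = 1 \<Longrightarrow> s = s0" using ex s0 by blast
    with s0 have e: "{s\<in>UNIV. A$s$t = 1} = {s0}" by blast
    have "(\<Sum>s\<in>UNIV. A$s$t) = real (card {s\<in>UNIV. A$s$t = 1})"
      by (rule sum_01) (rule z)
    also have "\<dots> = 1" unfolding e by simp
    finally show ?thesis .
  qed
  have "0 \<le> A$s$t" for s t using z[of s t] by auto
  with r c show ?thesis unfolding DS_def by blast
qed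

lemma axis2: "(axis s (axis t (1::real)) :: real^'s::finite^'s)$a$b = (if a = s \<and> b = t then 1 else 0)"
  by (simp add: axis_def)

lemma axis_nth': "axis i x $ j = (if j = i then x else 0)"
  by (simp add: axis_def)

lemma if_nth: "(if c then x else y) $ i = (if c then x $ i else y $ i)"
  by simp

lemma perturb_DS:
  fixes D E :: "real^'s::finite^'s"
  assumes nn: "\<And>s t. 0 \<le> D$s$t" and rs: "\<And>s. (\<Sum>t\<in>UNIV. D$s$t) = 1"
    and cs: "\<And>t. (\<Sum>s\<in>UNIV. D$s$t) = 1"
    and Ers: "\<And>s. (\<Sum>t\<in>UNIV. E$s$t) = 0" and Ecs: "\<And>t. (\<Sum>s\<in>UNIV. E$s$t) = 0"
    and bound: "\<And>s t. e * \<bar>E$s$t\<bar> \<le> D$s$t" and epos: "0 < e"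
  shows "D + e *\<^sub>R E \<in> DS \<and> D - e *\<^sub>R E \<in> DS"
proof -
  have a: "\<bar>e * E$s$t\<bar> \<le> D$s$t" for s t using bound[of s t] epos by (simp add: abs_mult)
  have p1: "0 \<le> D$s$t + e * E$s$t" for s t using a[of s t] by (simp add: abs_le_iff)
  have p2: "0 \<le> D$s$t - e * E$s$t" for s t using a[of s t] by (simp add: abs_le_iff)
  have r1: "(\<Sum>t\<in>UNIV. D$s$t + e * E$s$t) = 1" for s
    by (simp add: sum.distrib sum_distrib_left[symmetric] rs Ers)
  have r2: "(\<Sum>t\<in>UNIV. D$s$t - e * E$s$t) = 1" for s
    by (simp add: sum_subtractf sum_distrib_left[symmetric] rs Ers)
  have c1: "(\<Sum>s\<in>UNIV. D$s$t + e * E$s$t) = 1" for t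
    by (simp add: sum.distrib sum_distrib_left[symmetric] cs Ecs)
  have c2: "(\<Sum>s\<in>UNIV. D$s$t - e * E$s$t) = 1" for t
    by (simp add: sum_subtractf sum_distrib_left[symmetric] cs Ecs)
  show ?thesis unfolding DS_def using p1 p2 r1 r2 c1 c2 by simp
qed

lemma extreme_perm:
  fixes D :: "real^'s::finite^'s"
  assumes ext: "D extreme_point_of DS"
  shows "perm_matrix D"
proof -
  have D: "D \<in> DS" using ext extreme_point_of_def by blast
  hence nn: "\<And>s t. 0 \<le> D$s$t" and rs: "\<And>s. (\<Sum>t\<in>UNIV. D$s$t) = 1"
    and cs: "\<And>t. (\<Sum>s\<in>UNIV. D$s$t) = 1" by (auto simp: DS_def)
  define F where "F = {(s,t). 0 < D$s$t \<and> D$s$t < 1}"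
  have "F = {}"
  proof (rule ccontr)
    assume Fne: "F \<noteq> {}"
    define R where "R = fst ` F"
    define C where "C = snd ` F"
    have rowtwo: "2 \<le> card {t. (s,t) \<in> F}" if "s \<in> R" for s
    proof -
      obtain t where t: "(s,t) \<in> F" using \<open>s \<in> R\<close> R_def by auto
      then obtain t' where "t' \<noteq> t" "0 < D$s$t'" "D$s$t' < 1"
        using frac_two[of "\<lambda>t. D$s$t" t] nn rs by (auto simp: F_def)
      then have "{t,t'} \<subseteq> {t. (s,t) \<in> F}" using t by (auto simp: F_def)
      then have "card {t,t'} \<le> card {t. (s,t) \<in> F}" by (intro card_mono) auto
      with \<open>t' \<noteq> t\<close> show ?thesis by simp
    qed
    have coltwo: "2 \<le> card {s. (s,t) \<in> F}" if "t \<in> C" for t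
    proof -
      obtain s where s: "(s,t) \<in> F" using \<open>t \<in> C\<close> C_def by auto
      then obtain s' where "s' \<noteq> s" "0 < D$s'$t" "D$s'$t < 1"
        using frac_two[of "\<lambda>s. D$s$t" s] nn cs by (auto simp: F_def)
      then have "{s,s'} \<subseteq> {s. (s,t) \<in> F}" using s by (auto simp: F_def)
      then have "card {s,s'} \<le> card {s. (s,t) \<in> F}" by (intro card_mono) auto
      with \<open>s' \<noteq> s\<close> show ?thesis by simp
    qed
    have "F = Sigma R (\<lambda>s. {t. (s,t) \<in> F})" by (force simp: R_def)
    then have "card F = (\<Sum>s\<in>R. card {t. (s,t) \<in> F})" by (metis (no_types) card_SigmaI finite)
    also have "\<dots> \<ge> card R * 2" using sum_bounded_below[of R 2 "\<lambda>s. card {t. (s,t) \<in> F}"] rowtwo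
      by simp
    finally have cR: "2 * card R \<le> card F" by simp
    have "prod.swap ` F = Sigma C (\<lambda>t. {s. (s,t) \<in> F})" by (force simp: C_def)
    then have "card (prod.swap ` F) = (\<Sum>t\<in>C. card {s. (s,t) \<in> F})" by (metis (no_types) card_SigmaI finite)
    also have "card (prod.swap ` F) = card F" by (simp add: card_image)
    finally have "card F = (\<Sum>t\<in>C. card {s. (s,t) \<in> F})" .
    also have "\<dots> \<ge> card C * 2" using sum_bounded_below[of C 2 "\<lambda>t. card {s. (s,t) \<in> F}"] coltwo
      by simp
    finally have cC: "2 * card C \<le> card F" by simp
    have Cne: "C \<noteq> {}" using Fne C_def by auto
    then obtain t0 where t0: "t0 \<in> C" by auto
    have cCpos: "card C \<ge> 1" using Cne by (simp add: Suc_le_eq card_gt_0_iff)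
    define e :: "'s \<Rightarrow> 's \<Rightarrow> real^'s^'s" where "e s t = axis s (axis t 1)" for s t
    define X where "X = (\<lambda>(s,t). e s t) ` F"
    define L :: "real^'s^'s \<Rightarrow> (real^'s) \<times> (real^'s)"
      where "L = (\<lambda>M. ((\<chi> s. \<Sum>t\<in>UNIV. M$s$t), (\<chi> t. \<Sum>s\<in>UNIV. M$s$t)))"
    have linL: "linear L"
      unfolding L_def
      by (rule linearI) (auto simp: vec_eq_iff sum.distrib sum_distrib_left)
    have indX: "independent X"
      by (rule independent_mono[OF independent_Basis]) (auto simp: X_def e_def)
    have injE: "inj_on (\<lambda>(s,t). e s t) F"
      by (auto simp: inj_on_def e_def axis_eq_axis)
    have cardX: "card X = card F" unfolding X_def by (rule card_image[OF injE])
    define f0 :: "'s \<Rightarrow> (real^'s) \<times> (real^'s)" where "f0 s = (axis s 1, axis t0 1)" for s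
    define g0 :: "'s \<Rightarrow> (real^'s) \<times> (real^'s)" where "g0 t = (0, axis t 1 - axis t0 1)" for t
    define B where "B = f0 ` R \<union> g0 ` (C - {t0})"
    have cardB: "card B \<le> card R + (card C - 1)"
    proof -
      have "card B \<le> card (f0 ` R) + card (g0 ` (C - {t0}))"
        unfolding B_def by (rule card_Un_le)
      also have "\<dots> \<le> card R + card (C - {t0})" by (intro add_mono card_image_le) auto
      also have "card (C - {t0}) = card C - 1" using t0 by simp
      finally show ?thesis .
    qed
    have Le: "L (e s t) = (axis s 1, axis t 1)" for s t
    proof -
      have h1: "(\<Sum>b\<in>UNIV. (e s t)$a$b) = (axis s 1 :: real^'s)$a" for a
        unfolding e_def axis2 by (cases "a = s") (simp_all add: axis_nth')
      have h2: "(\<Sum>a\<in>UNIV. (e s t)$a$b) = (axis t 1 :: real^'s)$b" for b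
        unfolding e_def axis2 by (cases "b = t") (simp_all add: axis_nth')
      show ?thesis unfolding L_def using h1 h2 by (simp add: vec_eq_iff)
    qed
    have LX: "L ` X \<subseteq> span B"
    proof
      fix y assume "y \<in> L ` X"
      then obtain s t where st: "(s,t) \<in> F" and y: "y = L (e s t)" by (auto simp: X_def)
      have y2: "y = f0 s + g0 t" by (simp add: y Le f0_def g0_def)
      have "f0 s \<in> span B"
        by (rule span_base) (use st in \<open>force simp: B_def R_def\<close>)
      moreover have "g0 t \<in> span B"
      proof (cases "t = t0")
        case True then show ?thesis using span_zero[of B] by (simp add: zero_prod_def g0_def)
      next
        case False then show ?thesis
          by (intro span_base) (use st in \<open>force simp: B_def C_def\<close>)
      qed
      ultimately show "y \<in> span B" unfolding y2 by (rule span_add)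
    qed
    have "\<exists>E\<in>span X. E \<noteq> 0 \<and> L E = 0"
    proof (rule ccontr)
      assume "\<not> ?thesis"
      then have inj: "inj_on L (span X)"
        using linear_inj_on_iff_eq_0[OF linL subspace_span] by blast
      have "independent (L ` X)" by (rule linear_independent_injective_image[OF linL indX inj])
      moreover have "card (L ` X) = card X"
        by (rule card_image) (rule inj_on_subset[OF inj span_superset])
      ultimately have "card X \<le> card B"
        using independent_span_bound[of B "L ` X"] LX by (simp add: B_def)
      with cardX cardB cR cC cCpos show False by linarith
    qed
    then obtain E where EX: "E \<in> span X" and E0: "E \<noteq> 0" and LE: "L E = 0" by blast
    have "span X \<subseteq> {M. \<forall>s t. (s,t) \<notin> F \<longrightarrow> M$s$t = 0}"
    proof (rule span_minimal)
      show "X \<subseteq> {M. \<forall>s t. (s,t) \<notin> F \<longrightarrow> M$s$t = 0}"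
        by (auto simp: X_def e_def axis_def)
      show "subspace {M::real^'s^'s. \<forall>s t. (s,t) \<notin> F \<longrightarrow> M$s$t = 0}"
        by (auto simp: subspace_def)
    qed
    with EX have supp: "\<And>s t. (s,t) \<notin> F \<Longrightarrow> E$s$t = 0" by blast
    have Ers: "(\<Sum>t\<in>UNIV. E$s$t) = 0" for s
      using LE by (auto simp: L_def vec_eq_iff zero_prod_def)
    have Ecs: "(\<Sum>s\<in>UNIV. E$s$t) = 0" for t
      using LE by (auto simp: L_def vec_eq_iff zero_prod_def)
    define Mn where "Mn = Min ((\<lambda>(s,t). D$s$t) ` F)"
    have Mnpos: "0 < Mn" unfolding Mn_def using Fne by (auto simp: F_def)
    have MnD: "Mn \<le> D$s$t" if "(s,t) \<in> F" for s t
      unfolding Mn_def using that by (intro Min_le) auto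
    define K where "K = 1 + (\<Sum>s\<in>UNIV. \<Sum>t\<in>UNIV. \<bar>E$s$t\<bar>)"
    have EK: "\<bar>E$s$t\<bar> \<le> K" for s t
    proof -
      have "\<bar>E$s$t\<bar> \<le> (\<Sum>t\<in>UNIV. \<bar>E$s$t\<bar>)" by (rule member_le_sum) auto
      also have "\<dots> \<le> (\<Sum>s\<in>UNIV. \<Sum>t\<in>UNIV. \<bar>E$s$t\<bar>)"
        by (rule member_le_sum[of s UNIV "\<lambda>s. \<Sum>t\<in>UNIV. \<bar>E$s$t\<bar>"]) (auto intro: sum_nonneg)
      finally show ?thesis unfolding K_def by simp
    qed
    have "0 \<le> (\<Sum>s\<in>UNIV. \<Sum>t\<in>UNIV. \<bar>E$s$t\<bar>)" by (intro sum_nonneg) auto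
    then have Kpos: "0 < K" unfolding K_def by linarith
    define \<epsilon> where "\<epsilon> = Mn / K"
    have epos: "0 < \<epsilon>" using Mnpos Kpos by (simp add: \<epsilon>_def)
    have bound: "\<epsilon> * \<bar>E$s$t\<bar> \<le> D$s$t" for s t
    proof (cases "(s,t) \<in> F")
      case True
      have "\<epsilon> * \<bar>E$s$t\<bar> \<le> \<epsilon> * K" using EK epos by (intro mult_left_mono) auto
      also have "\<dots> = Mn" using Kpos by (simp add: \<epsilon>_def)
      finally show ?thesis using MnD[OF True] by linarith
    next
      case False then show ?thesis using supp nn by simp
    qed
    note PQ = perturb_DS[OF nn rs cs Ers Ecs bound epos]
    have P: "D + \<epsilon> *\<^sub>R E \<in> DS" using PQ by (rule conjunct1)
    have Q: "D - \<epsilon> *\<^sub>R E \<in> DS" using PQ by (rule conjunct2)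
    have "D \<in> open_segment (D - \<epsilon> *\<^sub>R E) (D + \<epsilon> *\<^sub>R E)"
    proof -
      obtain s t where st: "E$s$t \<noteq> 0" using E0 by (auto simp: vec_eq_iff)
      then have neq: "(D - \<epsilon> *\<^sub>R E)$s$t \<noteq> (D + \<epsilon> *\<^sub>R E)$s$t" using epos by simp
      have ne: "D - \<epsilon> *\<^sub>R E \<noteq> D + \<epsilon> *\<^sub>R E"
      proof
        assume "D - \<epsilon> *\<^sub>R E = D + \<epsilon> *\<^sub>R E"
        with neq show False by simp
      qed
      have "midpoint (D - \<epsilon> *\<^sub>R E) (D + \<epsilon> *\<^sub>R E) = D"
        by (simp add: midpoint_def vec_eq_iff)
      with ne show ?thesis using midpoint_in_open_segment[of "D - \<epsilon> *\<^sub>R E" "D + \<epsilon> *\<^sub>R E"] by simp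
    qed
    with ext P Q show False unfolding extreme_point_of_def by blast
  qed
  then have z: "D$s$t = 0 \<or> D$s$t = 1" for s t
  proof -
    have "D$s$t \<le> 1" using member_le_sum[of t UNIV "\<lambda>t. D$s$t"] nn rs by auto
    moreover have "\<not> (0 < D$s$t \<and> D$s$t < 1)" using \<open>F = {}\<close> by (auto simp: F_def)
    ultimately show ?thesis using nn[of s t] by linarith
  qed
  have "\<exists>!t. D$s$t = 1" for s by (rule zero_one_sum) (use z rs in auto)
  moreover have "\<exists>!s. D$s$t = 1" for t by (rule zero_one_sum[of "\<lambda>s. D$s$t"]) (use z cs in auto)
  ultimately show ?thesis using z unfolding perm_matrix_def by auto
qed


lemma birkhoff: "(DS :: (real^'s::finite^'s) set) = convex hull {A. perm_matrix A}"
proof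
  show "convex hull {A. perm_matrix A} \<subseteq> (DS :: (real^'s::finite^'s) set)"
    by (rule hull_minimal) (auto intro: perm_DS convex_DS)
  have "(DS :: (real^'s::finite^'s) set) = convex hull {x. x extreme_point_of DS}"
    by (rule Krein_Milman_Minkowski[OF compact_DS convex_DS])
  also have "\<dots> \<subseteq> convex hull {A. perm_matrix A}"
    by (rule hull_mono) (auto intro: extreme_perm)
  finally show "(DS :: (real^'s::finite^'s) set) \<subseteq> convex hull {A. perm_matrix A}" .
qed

lemma delta1: "(\<Sum>t\<in>(UNIV::'s::finite set). if s = t then (c::real) else 0) = c"
  by (simp add: sum.delta')

lemma delta2: "(\<Sum>s\<in>(UNIV::'s::finite set). if s = t then (c::real) else 0) = c"
  by (simp add: sum.delta)

lemma rowsum_aux: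
  fixes \<mu> :: "real^'s::finite^'s" and m :: "real^'s"
  assumes r: "\<And>s. (\<Sum>t\<in>UNIV. \<mu>$s$t) = m$s"
  shows "(\<Sum>t\<in>UNIV. \<mu>$s$t - (if s = t then m$s else 0) + (if s = t then 1 else 0)) = 1"
  by (simp only: sum.distrib sum_subtractf r delta1; simp)

lemma colsum_aux:
  fixes \<mu> :: "real^'s::finite^'s" and m :: "real^'s"
  assumes c: "\<And>t. (\<Sum>s\<in>UNIV. \<mu>$s$t) = m$t"
  shows "(\<Sum>s\<in>UNIV. \<mu>$s$t - (if s = t then m$s else 0) + (if s = t then 1 else 0)) = 1"
proof -
  have "(\<Sum>s\<in>UNIV. \<mu>$s$t - (if s = t then m$s else 0) + (if s = t then 1 else 0))
      = (\<Sum>s\<in>UNIV. \<mu>$s$t - (if s = t then m$t else 0) + (if s = t then 1 else 0))"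
    by (rule sum.cong) auto
  also have "\<dots> = 1" by (simp only: sum.distrib sum_subtractf c delta2; simp)
  finally show ?thesis .
qed

lemma mat1_nth: "(mat 1 :: real^'s::finite^'s) $ s $ t = (if s = t then 1 else 0)"
  by (simp add: mat_def)

lemma mu0_nth: "mu0 m $ s $ t = (if s = t then m$s else 0)"
  by (simp add: mu0_def)

theorem lemma5:
  fixes m :: "real^'s::finite"
  assumes "prob_dist m"
  shows "couplings m =
    {mu0 m - mat 1 + J | J. J \<in> convex hull {A. perm_matrix A}}
    \<inter> {\<mu>. \<forall>s t. 0 \<le> \<mu>$s$t}"
proof
  have mnn: "\<And>s. 0 \<le> m$s" and m1: "(\<Sum>s\<in>UNIV. m$s) = 1" using assms by (auto simp: prob_dist_def)
  have mle: "m$s \<le> 1" for s using member_le_sum[of s UNIV "\<lambda>s. m$s"] mnn m1 by auto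
  show "couplings m \<subseteq> {mu0 m - mat 1 + J | J. J \<in> convex hull {A. perm_matrix A}} \<inter> {\<mu>. \<forall>s t. 0 \<le> \<mu>$s$t}"
  proof
    fix \<mu> assume mu: "\<mu> \<in> couplings m"
    then have nn: "\<And>s t. 0 \<le> \<mu>$s$t" and r: "\<And>s. (\<Sum>t\<in>UNIV. \<mu>$s$t) = m$s"
      and c: "\<And>t. (\<Sum>s\<in>UNIV. \<mu>$s$t) = m$t" by (auto simp: couplings_def)
    define J where "J = \<mu> - mu0 m + mat 1"
    have Jn: "J$s$t = \<mu>$s$t - (if s = t then m$s else 0) + (if s = t then 1 else 0)" for s t
      by (simp add: J_def mu0_nth mat1_nth)
    have "J \<in> DS"
    proof -
      have "0 \<le> J$s$t" for s t using nn[of s t] mle[of s] unfolding Jn by (cases "s = t") simp_all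
      moreover have "(\<Sum>t\<in>UNIV. J$s$t) = 1" for s
        using rowsum_aux[of \<mu> m s, OF r] by (simp only: Jn)
      moreover have "(\<Sum>s\<in>UNIV. J$s$t) = 1" for t
        using colsum_aux[of \<mu> m t, OF c] by (simp only: Jn)
      ultimately show ?thesis unfolding DS_def by blast
    qed
    then have Jh: "J \<in> convex hull {A. perm_matrix A}" by (simp only: birkhoff)
    have mJ: "\<mu> = mu0 m - mat 1 + J" by (simp add: J_def)
    show "\<mu> \<in> {mu0 m - mat 1 + J | J. J \<in> convex hull {A. perm_matrix A}} \<inter> {\<mu>. \<forall>s t. 0 \<le> \<mu>$s$t}"
    proof (rule IntI)
      show "\<mu> \<in> {mu0 m - mat 1 + J | J. J \<in> convex hull {A. perm_matrix A}}"
        using Jh mJ by (intro CollectI exI[of _ J]) simp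
      show "\<mu> \<in> {\<mu>. \<forall>s t. 0 \<le> \<mu>$s$t}" using nn by simp
    qed
  qed
  show "{mu0 m - mat 1 + J | J. J \<in> convex hull {A. perm_matrix A}} \<inter> {\<mu>. \<forall>s t. 0 \<le> \<mu>$s$t} \<subseteq> couplings m"
  proof
    fix \<mu> assume "\<mu> \<in> {mu0 m - mat 1 + J | J. J \<in> convex hull {A. perm_matrix A}} \<inter> {\<mu>. \<forall>s t. 0 \<le> \<mu>$s$t}"
    then obtain J where J: "J \<in> convex hull {A. perm_matrix A}" and mu: "\<mu> = mu0 m - mat 1 + J"
      and nn: "\<And>s t. 0 \<le> \<mu>$s$t" by blast
    have "J \<in> DS" using J by (simp only: birkhoff)
    then have r: "\<And>s. (\<Sum>t\<in>UNIV. J$s$t) = 1" and c: "\<And>t. (\<Sum>s\<in>UNIV. J$s$t) = 1"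
      by (auto simp: DS_def)
    have mn: "\<mu>$s$t = (if s = t then m$s else 0) - (if s = t then 1 else 0) + J$s$t" for s t
      by (simp add: mu mu0_nth mat1_nth)
    have rs: "(\<Sum>t\<in>UNIV. \<mu>$s$t) = m$s" for s
      unfolding mn by (simp only: sum.distrib sum_subtractf r delta1; simp)
    have cs: "(\<Sum>s\<in>UNIV. \<mu>$s$t) = m$t" for t
      unfolding mn by (simp only: sum.distrib sum_subtractf c delta2; simp)
    have "(\<Sum>s\<in>UNIV. \<Sum>t\<in>UNIV. \<mu>$s$t) = 1" using rs m1 by simp
    then show "\<mu> \<in> couplings m" unfolding couplings_def using nn rs cs by blast
  qed
qed

end
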